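(* Fix $B\in\mathbb N$ and allocation functions $w_j$, $j\in[B]$, where $w_j$ maps $\mu^{j-1}=(\mu_1,\dots,\mu_{j-1})\in((\Delta_{\mathcal X})^K)^{j-1}$ to $\Delta_K$ ($w_1$ a constant). Consider the batched sampling scheme with horizon $T$: in batch $j=1,\dots,B$ each arm $a$ is pulled exactly $w_j(a)(Q^{j-1})\,T/B$ times (horizons $T$ are restricted to those for which these counts are integers), each pull of arm $a$ yields an independent sample from $\nu_a$, and $Q_{j,a}$ is the empirical distribution of the samples of arm $a$ in batch $j$ (a fixed arbitrary distribution if there are none), $Q_j=(Q_{j,a})_a$, $Q^j=(Q_1,\dots,Q_j)$. Then for every set $\Gamma\subseteq((\Delta_{\mathcal X})^K)^B$, $$\liminf_{T\to\infty}-\frac1T\log P_\nu\big[Q^B\in\Gamma\big]\ \ge\ \inf_{\mu^B\in\bar\Gamma}\ \frac1B\sum_{j=1}^B\sum_{a=1}^Kw_j(a)(\mu^{j-1})\,D(\mu_{j,a}\|\nu_a),$$ where $\bar\Gamma$ is the closure of $\Gamma$ and $\mu^B=(\mu_1,\dots,\mu_B)$ with $\mu_j=(\mu_{j,a})_a$.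
   Context: $\mathcal X$ is a finite set, $\Delta_{\mathcal X}$ the probability distributions on $\mathcal X$, $\Delta_K$ the simplex on $[K]$, $D$ the KL divergence. $\nu=(\nu_a)_{a\in[K]}$ is a bandit with each $\nu_a\in\Delta_{\mathcal X}$ having full support on $\mathcal X$; $P_\nu$ denotes the law of the sampling scheme under $\nu$. *)

theory Defs
  imports "HOL-Analysis.Analysis" "HOL-Probability.Probability"
begin

definition pdists :: "('x::finite \<Rightarrow> real) set" where
  "pdists = {p. (\<forall>x. 0 \<le> p x) \<and> (\<Sum>x\<in>UNIV. p x) = 1}"

definition KL :: "('x::finite \<Rightarrow> real) \<Rightarrow> ('x \<Rightarrow> real) \<Rightarrow> real" where
  "KL p q = (\<Sum>x\<in>UNIV. if p x = 0 then 0 else p x * ln (p x / q x))"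

(* sequences mu^B = (mu_1,...,mu_B) of K-tuples of distributions, encoded as
   functions nat => arm => distribution, with mu_j = 0 outside 1..B *)
definition DSeq :: "nat \<Rightarrow> (nat \<Rightarrow> 'k \<Rightarrow> 'x::finite \<Rightarrow> real) set" where
  "DSeq B = {\<mu>. \<forall>j. (j \<in> {1..B} \<longrightarrow> (\<forall>a. \<mu> j a \<in> pdists))
                  \<and> (j \<notin> {1..B} \<longrightarrow> \<mu> j = (\<lambda>_ _. 0))}"

(* the prefix mu^{j-1} = (mu_1,...,mu_{j-1}) *)
definition prefix :: "nat \<Rightarrow> (nat \<Rightarrow> 'k \<Rightarrow> 'x \<Rightarrow> real) \<Rightarrow> (nat \<Rightarrow> 'k \<Rightarrow> 'x \<Rightarrow> real)" where
  "prefix j \<mu> = (\<lambda>i. if 1 \<le> i \<and> i < j then \<mu> i else (\<lambda>_ _. 0))"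

primrec iid :: "nat \<Rightarrow> 'x pmf \<Rightarrow> 'x list pmf" where
  "iid 0 p = return_pmf []"
| "iid (Suc n) p = bind_pmf p (\<lambda>x. map_pmf (Cons x) (iid n p))"

definition emp :: "('x \<Rightarrow> real) \<Rightarrow> 'x list \<Rightarrow> ('x \<Rightarrow> real)" where
  "emp q0 xs = (if xs = [] then q0 else (\<lambda>x. real (count_list xs x) / real (length xs)))"

definition pulls :: "nat \<Rightarrow> nat \<Rightarrow> (nat \<Rightarrow> (nat \<Rightarrow> 'k \<Rightarrow> 'x \<Rightarrow> real) \<Rightarrow> 'k \<Rightarrow> real)
                     \<Rightarrow> nat \<Rightarrow> (nat \<Rightarrow> 'k \<Rightarrow> 'x \<Rightarrow> real) \<Rightarrow> 'k \<Rightarrow> nat" where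
  "pulls T B w j h a = nat \<lfloor>w j h a * real T / real B\<rfloor>"

definition batch :: "('x \<Rightarrow> real) \<Rightarrow> ('k \<Rightarrow> 'x pmf) \<Rightarrow> ('k \<Rightarrow> nat) \<Rightarrow> ('k \<Rightarrow> 'x \<Rightarrow> real) pmf" where
  "batch q0 \<nu> n = Pi_pmf UNIV q0 (\<lambda>a. map_pmf (emp q0) (iid (n a) (\<nu> a)))"

(* law of Q^j (entries beyond j are 0) *)
primrec scheme :: "nat \<Rightarrow> nat \<Rightarrow> (nat \<Rightarrow> (nat \<Rightarrow> 'k \<Rightarrow> 'x \<Rightarrow> real) \<Rightarrow> 'k \<Rightarrow> real)
          \<Rightarrow> ('k \<Rightarrow> 'x pmf) \<Rightarrow> ('x \<Rightarrow> real) \<Rightarrow> nat \<Rightarrow> (nat \<Rightarrow> 'k \<Rightarrow> 'x \<Rightarrow> real) pmf" where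
  "scheme T B w \<nu> q0 0 = return_pmf (\<lambda>_ _ _. 0)"
| "scheme T B w \<nu> q0 (Suc j) =
     bind_pmf (scheme T B w \<nu> q0 j)
       (\<lambda>h. map_pmf (\<lambda>q. h(Suc j := q)) (batch q0 \<nu> (pulls T B w (Suc j) h)))"

definition admissible :: "nat \<Rightarrow> (nat \<Rightarrow> (nat \<Rightarrow> 'k \<Rightarrow> 'x \<Rightarrow> real) \<Rightarrow> 'k \<Rightarrow> real)
          \<Rightarrow> ('k \<Rightarrow> 'x pmf) \<Rightarrow> ('x \<Rightarrow> real) \<Rightarrow> nat set" where
  "admissible B w \<nu> q0 = {T. 0 < T \<and> (\<forall>j\<in>{1..B}. \<forall>h\<in>set_pmf (scheme T B w \<nu> q0 (j - 1)).
        \<forall>a. w j h a * real T / real B \<in> \<int>)}"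

definition rate :: "nat \<Rightarrow> real \<Rightarrow> ereal" where
  "rate T P = (if P = 0 then \<infinity> else ereal (- ln P / real T))"

definition cost :: "nat \<Rightarrow> (nat \<Rightarrow> (nat \<Rightarrow> 'k::finite \<Rightarrow> 'x::finite \<Rightarrow> real) \<Rightarrow> 'k \<Rightarrow> real)
          \<Rightarrow> ('k \<Rightarrow> 'x pmf) \<Rightarrow> (nat \<Rightarrow> 'k \<Rightarrow> 'x \<Rightarrow> real) \<Rightarrow> real" where
  "cost B w \<nu> \<mu> = (1 / real B) * (\<Sum>j=1..B. \<Sum>a\<in>UNIV. w j (prefix j \<mu>) a * KL (\<mu> j a) (pmf (\<nu> a)))"

end

theory Submission
  imports Defs
begin

lemma iid_set: "set_pmf (iid n p) \<subseteq> {xs. length xs = n}"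
  by (induction n) auto

lemma pmf_Cons_map: "pmf (map_pmf (Cons x) M) (y#ys) = (if x = y then pmf M ys else 0)"
proof (cases "x = y")
  case True then show ?thesis by (simp add: pmf_map_inj')
next
  case False
  then have "Cons x -` {y#ys} = {}" by auto
  then show ?thesis using False by (simp add: pmf_map)
qed

lemma pmf_iid: "length xs = n \<Longrightarrow> pmf (iid n p) xs = prod_list (map (pmf p) xs)"
proof (induction n arbitrary: xs)
  case 0 then show ?case by simp
next
  case (Suc n)
  then obtain y ys where xs: "xs = y#ys" and len: "length ys = n" by (cases xs) auto
  have "pmf (iid (Suc n) p) xs = (LINT x|measure_pmf p. pmf (map_pmf (Cons x) (iid n p)) (y#ys))"
    by (simp add: xs pmf_bind)
  also have "\<dots> = (LINT x|measure_pmf p. (if x = y then pmf (iid n p) ys else 0))"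
    by (simp add: pmf_Cons_map)
  also have "\<dots> = (\<Sum>a\<in>{y}. pmf p a *\<^sub>R (if a = y then pmf (iid n p) ys else 0))"
    by (rule integral_measure_pmf) (auto split: if_splits)
  also have "\<dots> = pmf p y * prod_list (map (pmf p) ys)" using Suc.IH[OF len] by simp
  finally show ?case by (simp add: xs)
qed

lemma sum_prod_lists:
  fixes f :: "'a::finite \<Rightarrow> real"
  shows "(\<Sum>xs\<in>{xs. length xs = n}. prod_list (map f xs)) = (\<Sum>x\<in>UNIV. f x) ^ n"
proof (induction n)
  case 0 then show ?case by simp
next
  case (Suc n)
  have fin: "finite {xs::'a list. length xs = n}"
    using finite_lists_length_eq[of "UNIV::'a set" n] by simp
  have eq: "{xs::'a list. length xs = Suc n} = (\<lambda>(x,xs). x#xs) ` (UNIV \<times> {xs. length xs = n})"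
    by (auto simp: image_def length_Suc_conv)
  have inj: "inj_on (\<lambda>(x,xs). x#xs) (UNIV \<times> {xs::'a list. length xs = n})"
    by (auto simp: inj_on_def)
  have "(\<Sum>xs\<in>{xs. length xs = Suc n}. prod_list (map f xs))
      = (\<Sum>(x,xs)\<in>UNIV \<times> {xs. length xs = n}. f x * prod_list (map f xs))"
    unfolding eq by (subst sum.reindex[OF inj]) (simp add: case_prod_beta)
  also have "\<dots> = (\<Sum>x\<in>UNIV. f x * (\<Sum>xs\<in>{xs. length xs = n}. prod_list (map f xs)))"
    by (simp add: sum.cartesian_product[symmetric] sum_distrib_left)
  also have "\<dots> = (\<Sum>x\<in>UNIV. f x) ^ Suc n" by (simp add: Suc.IH sum_distrib_right[symmetric])
  finally show ?case .
qed


lemma sum_list_count_real: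
  fixes g :: "'a::finite \<Rightarrow> real"
  shows "sum_list (map g xs) = (\<Sum>x\<in>UNIV. real (count_list xs x) * g x)"
proof (induction xs)
  case Nil then show ?case by simp
next
  case (Cons a xs)
  have "(\<Sum>x\<in>UNIV. real (count_list (a#xs) x) * g x) = (\<Sum>x\<in>UNIV. real (count_list xs x) * g x + (if a = x then g x else 0))"
    by (rule sum.cong) (auto simp: algebra_simps)
  then show ?case using Cons by (simp add: sum.distrib del: count_list.simps)
qed

lemma prod_list_exp_ln:
  fixes f :: "'a::finite \<Rightarrow> real"
  assumes "\<forall>x\<in>set xs. f x > 0"
  shows "prod_list (map f xs) = exp (\<Sum>x\<in>UNIV. real (count_list xs x) * ln (f x))"
proof -
  have "prod_list (map f xs) = exp (sum_list (map (\<lambda>x. ln (f x)) xs))"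
    using assms by (induction xs) (auto simp: exp_add)
  also have "sum_list (map (\<lambda>x. ln (f x)) xs) = (\<Sum>x\<in>UNIV. real (count_list xs x) * ln (f x))"
    by (rule sum_list_count_real)
  finally show ?thesis .
qed

lemma emp_pos:
  assumes "xs \<noteq> []" "x \<in> set xs"
  shows "emp q0 xs x > 0"
  using assms count_list_0_iff[of xs x] by (auto simp: emp_def)

lemma emp_pdists:
  assumes "xs \<noteq> []"
  shows "emp q0 (xs :: 'x::finite list) \<in> pdists"
proof -
  have "(\<Sum>x\<in>UNIV. real (count_list xs x)) = real (length xs)"
    using sum_count_set[of xs UNIV] by (simp flip: of_nat_sum)
  then show ?thesis using assms
    by (auto simp: emp_def pdists_def sum_divide_distrib[symmetric])
qed

lemma type_class_bound:
  fixes p :: "'x::finite pmf"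
  assumes n: "n > 0" and full: "\<And>x. pmf p x > 0"
  shows "pmf (map_pmf (emp q0) (iid n p)) q \<le> exp (- real n * KL q (pmf p))"
proof -
  define TC where "TC = {xs::'x list. length xs = n \<and> emp q0 xs = q}"
  have finL: "finite {xs::'x list. length xs = n}"
    using finite_lists_length_eq[of "UNIV::'x set" n] by simp
  have finTC: "finite TC" unfolding TC_def by (rule finite_subset[OF _ finL]) auto
  have "pmf (map_pmf (emp q0) (iid n p)) q = measure (iid n p) (emp q0 -` {q})"
    by (simp add: pmf_map)
  also have "\<dots> = measure (iid n p) (emp q0 -` {q} \<inter> set_pmf (iid n p))"
    by (simp add: measure_Int_set_pmf)
  also have "\<dots> \<le> measure (iid n p) TC"
    using iid_set[of n p] by (intro measure_pmf.finite_measure_mono) (auto simp: TC_def)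
  also have "\<dots> = (\<Sum>xs\<in>TC. pmf (iid n p) xs)" by (rule measure_measure_pmf_finite[OF finTC])
  also have "\<dots> \<le> exp (- real n * KL q (pmf p))"
  proof (cases "TC = {}")
    case True then show ?thesis by simp
  next
    case False
    then obtain xs0 where xs0: "length xs0 = n" "emp q0 xs0 = q" by (auto simp: TC_def)
    have xs0ne: "xs0 \<noteq> []" using xs0 n by auto
    have qpd: "q \<in> pdists" using emp_pdists[OF xs0ne, of q0] xs0 by simp
    have qnn: "\<And>x. q x \<ge> 0" using qpd by (simp add: pdists_def)
    have key: "pmf (iid n p) xs = exp (- real n * KL q (pmf p)) * prod_list (map q xs)"
      if xs: "xs \<in> TC" for xs
    proof -
      have len: "length xs = n" and eq: "emp q0 xs = q" using xs by (auto simp: TC_def)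
      have ne: "xs \<noteq> []" using len n by auto
      have cnt: "real (count_list xs x) = real n * q x" for x
        using eq ne len by (auto simp: emp_def)
      have qpos: "\<forall>x\<in>set xs. q x > 0" using emp_pos[OF ne] eq by auto
      have "pmf (iid n p) xs = exp (\<Sum>x\<in>UNIV. real (count_list xs x) * ln (pmf p x))"
        using pmf_iid[OF len] prod_list_exp_ln[of xs "pmf p"] full by simp
      also have "(\<Sum>x\<in>UNIV. real (count_list xs x) * ln (pmf p x))
          = (- real n * KL q (pmf p)) + (\<Sum>x\<in>UNIV. real (count_list xs x) * ln (q x))"
      proof -
        have "real (count_list xs x) * ln (pmf p x)
            = - real n * (if q x = 0 then 0 else q x * ln (q x / pmf p x))
              + real (count_list xs x) * ln (q x)" for x
        proof (cases "q x = 0")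
          case True then show ?thesis using cnt[of x] by simp
        next
          case False
          then have "q x > 0" using qnn[of x] by linarith
          then show ?thesis using cnt[of x] full[of x] False
            by (simp add: ln_div algebra_simps)
        qed
        then show ?thesis
          by (simp add: KL_def sum_subtractf sum_negf sum_distrib_left)
      qed
      finally show ?thesis
        using prod_list_exp_ln[OF qpos] by (simp add: mult_exp_exp)
    qed
    have "(\<Sum>xs\<in>TC. pmf (iid n p) xs) = exp (- real n * KL q (pmf p)) * (\<Sum>xs\<in>TC. prod_list (map q xs))"
      by (simp add: key sum_distrib_left)
    also have "(\<Sum>xs\<in>TC. prod_list (map q xs)) \<le> (\<Sum>xs\<in>{xs. length xs = n}. prod_list (map q xs))"
      using finL qnn by (intro sum_mono2) (auto simp: TC_def intro!: prod_list_nonneg)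
    also have "\<dots> = 1" using sum_prod_lists[where f=q and n=n] qpd by (simp add: pdists_def)
    finally show ?thesis by (simp add: mult_left_mono)
  qed
  finally show ?thesis .
qed


lemma batch_bound:
  fixes \<nu> :: "'k::finite \<Rightarrow> 'x::finite pmf"
  assumes full: "\<And>a x. pmf (\<nu> a) x > 0"
  shows "pmf (batch q0 \<nu> n) f \<le> exp (- (\<Sum>a\<in>UNIV. real (n a) * KL (f a) (pmf (\<nu> a))))"
proof -
  have "pmf (batch q0 \<nu> n) f = (\<Prod>a\<in>UNIV. pmf (map_pmf (emp q0) (iid (n a) (\<nu> a))) (f a))"
    unfolding batch_def by (subst pmf_Pi) auto
  also have "\<dots> \<le> (\<Prod>a\<in>UNIV. exp (- real (n a) * KL (f a) (pmf (\<nu> a))))"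
  proof (rule prod_mono, safe)
    fix a
    show "0 \<le> pmf (map_pmf (emp q0) (iid (n a) (\<nu> a))) (f a)" by simp
    show "pmf (map_pmf (emp q0) (iid (n a) (\<nu> a))) (f a) \<le> exp (- real (n a) * KL (f a) (pmf (\<nu> a)))"
    proof (cases "n a = 0")
      case True then show ?thesis by (simp add: pmf_le_1)
    next
      case False then show ?thesis using type_class_bound[of "n a" "\<nu> a" q0 "f a"] full by auto
    qed
  qed
  also have "\<dots> = exp (- (\<Sum>a\<in>UNIV. real (n a) * KL (f a) (pmf (\<nu> a))))"
    by (simp add: exp_sum sum_negf[symmetric])
  finally show ?thesis .
qed

lemma batch_set:
  fixes \<nu> :: "'k::finite \<Rightarrow> 'x::finite pmf"
  shows "q \<in> set_pmf (batch q0 \<nu> n) \<Longrightarrow> q a \<in> emp q0 ` set_pmf (iid (n a) (\<nu> a))"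
  unfolding batch_def by (subst (asm) set_Pi_pmf) (auto simp: PiE_dflt_def)

lemma batch_pdists:
  fixes \<nu> :: "'k::finite \<Rightarrow> 'x::finite pmf"
  assumes "q0 \<in> pdists" "q \<in> set_pmf (batch q0 \<nu> n)"
  shows "q a \<in> pdists"
proof -
  obtain xs where "q a = emp q0 xs" using batch_set[OF assms(2), of a] by auto
  then show ?thesis using emp_pdists[of xs q0] assms(1) by (cases "xs = []") (auto simp: emp_def)
qed

lemma scheme_SucE:
  assumes "\<mu> \<in> set_pmf (scheme T B w \<nu> q0 (Suc j))"
  obtains h q where "h \<in> set_pmf (scheme T B w \<nu> q0 j)"
    "q \<in> set_pmf (batch q0 \<nu> (pulls T B w (Suc j) h))" "\<mu> = h(Suc j := q)"
  using assms unfolding scheme.simps set_bind_pmf set_map_pmf by blast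

lemma scheme_set:
  fixes \<nu> :: "'k::finite \<Rightarrow> 'x::finite pmf"
  assumes "q0 \<in> pdists"
  shows "\<mu> \<in> set_pmf (scheme T B w \<nu> q0 j) \<Longrightarrow>
    (\<forall>i. (i \<in> {1..j} \<longrightarrow> (\<forall>a. \<mu> i a \<in> pdists)) \<and> (i \<notin> {1..j} \<longrightarrow> \<mu> i = (\<lambda>_ _. 0)))"
proof (induction j arbitrary: \<mu>)
  case 0 then show ?case by simp
next
  case (Suc j)
  obtain h q where h: "h \<in> set_pmf (scheme T B w \<nu> q0 j)" and
    q: "q \<in> set_pmf (batch q0 \<nu> (pulls T B w (Suc j) h))" and mu: "\<mu> = h(Suc j := q)"
    using Suc.prems by (rule scheme_SucE)
  show ?case
  proof
    fix i
    show "(i \<in> {1..Suc j} \<longrightarrow> (\<forall>a. \<mu> i a \<in> pdists)) \<and> (i \<notin> {1..Suc j} \<longrightarrow> \<mu> i = (\<lambda>_ _. 0))"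
    proof (cases "i = Suc j")
      case True then show ?thesis using batch_pdists[OF assms q] unfolding mu by simp
    next
      case False then show ?thesis using Suc.IH[OF h] unfolding mu by auto
    qed
  qed
qed

lemma scheme_prefix_self:
  fixes \<nu> :: "'k::finite \<Rightarrow> 'x::finite pmf"
  assumes "q0 \<in> pdists" "\<mu> \<in> set_pmf (scheme T B w \<nu> q0 j)"
  shows "prefix (Suc j) \<mu> = \<mu>"
proof
  fix i
  show "prefix (Suc j) \<mu> i = \<mu> i" using scheme_set[OF assms] by (auto simp: prefix_def)
qed

lemma scheme_prefix:
  fixes \<nu> :: "'k::finite \<Rightarrow> 'x::finite pmf"
  assumes q0: "q0 \<in> pdists"
  shows "\<mu> \<in> set_pmf (scheme T B w \<nu> q0 j) \<Longrightarrow> i \<le> j \<Longrightarrow> prefix (Suc i) \<mu> \<in> set_pmf (scheme T B w \<nu> q0 i)"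
proof (induction j arbitrary: \<mu>)
  case 0 then show ?case using scheme_prefix_self[OF q0 0(1)] by simp
next
  case (Suc j)
  show ?case
  proof (cases "i = Suc j")
    case True then show ?thesis using scheme_prefix_self[OF q0 Suc(2)] Suc(2) by simp
  next
    case False
    then have ij: "i \<le> j" using Suc(3) by simp
    obtain h q where h: "h \<in> set_pmf (scheme T B w \<nu> q0 j)" and mu: "\<mu> = h(Suc j := q)"
      using Suc(2) by (rule scheme_SucE)
    have "prefix (Suc i) \<mu> = prefix (Suc i) h" using ij unfolding mu by (auto simp: prefix_def fun_eq_iff)
    then show ?thesis using Suc.IH[OF h ij] by simp
  qed
qed


lemma scheme_bound:
  fixes \<nu> :: "'k::finite \<Rightarrow> 'x::finite pmf"
  assumes q0: "q0 \<in> pdists" and full: "\<And>a x. pmf (\<nu> a) x > 0"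
  shows "pmf (scheme T B w \<nu> q0 j) \<mu> \<le>
    exp (- (\<Sum>i\<in>{1..j}. \<Sum>a\<in>UNIV. real (pulls T B w i (prefix i \<mu>) a) * KL (\<mu> i a) (pmf (\<nu> a))))"
proof (induction j arbitrary: \<mu>)
  case 0 then show ?case by (simp add: pmf_le_1)
next
  case (Suc j)
  define S where "S = (\<lambda>j \<mu>. (\<Sum>i\<in>{1..j}. \<Sum>a\<in>UNIV. real (pulls T B w i (prefix i \<mu>) a) * KL (\<mu> i a) (pmf (\<nu> a))))"
  define M where "M = scheme T B w \<nu> q0 j"
  define g where "g = (\<lambda>h. map_pmf (\<lambda>q. h(Suc j := q)) (batch q0 \<nu> (pulls T B w (Suc j) h)))"
  define h0 where "h0 = \<mu>(Suc j := (\<lambda>_ _. 0))"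
  show ?case
  proof (cases "\<mu> \<in> set_pmf (scheme T B w \<nu> q0 (Suc j))")
    case False then show ?thesis by (simp add: set_pmf_eq)
  next
    case True
    note mu_set = scheme_set[OF q0 True]
    have inj: "inj (\<lambda>q. h(Suc j := q))" for h :: "nat \<Rightarrow> 'k \<Rightarrow> 'x \<Rightarrow> real"
      by (rule injI) (metis fun_upd_same)
    have pre: "prefix (Suc j) \<mu> = h0"
    proof
      fix i show "prefix (Suc j) \<mu> i = h0 i" using mu_set[rule_format, of i]
        by (cases "i = 0") (auto simp: prefix_def h0_def)
    qed
    have Sj: "S j h0 = S j \<mu>"
    proof -
      have p1: "prefix i h0 = prefix i \<mu>" if "i \<in> {1..j}" for i
        using that by (intro ext) (simp add: prefix_def h0_def)
      have p2: "h0 i = \<mu> i" if "i \<in> {1..j}" for i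
        using that by (simp add: h0_def)
      show ?thesis unfolding S_def by (intro sum.cong refl) (simp add: p1 p2)
    qed
    have "pmf (scheme T B w \<nu> q0 (Suc j)) \<mu> = (LINT h|measure_pmf M. pmf (g h) \<mu>)"
      by (simp add: M_def g_def pmf_bind)
    also have "\<dots> = (\<Sum>h\<in>{h0}. pmf M h *\<^sub>R pmf (g h) \<mu>)"
    proof (rule integral_measure_pmf)
      fix h assume h: "h \<in> set_pmf M" and nz: "pmf (g h) \<mu> \<noteq> 0"
      then have "\<mu> \<in> set_pmf (g h)" by (simp add: set_pmf_eq)
      then obtain q where eq: "\<mu> = h(Suc j := q)" unfolding g_def set_map_pmf by blast
      have hz: "h (Suc j) = (\<lambda>_ _. 0)" using scheme_set[OF q0 h[unfolded M_def], rule_format, of "Suc j"] by simp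
      have "h0 = h" unfolding h0_def eq using hz by (metis fun_upd_upd fun_upd_triv)
      then have "h = h0" by simp
      then show "h \<in> {h0}" by simp
    qed simp
    also have "\<dots> = pmf M h0 * pmf (batch q0 \<nu> (pulls T B w (Suc j) h0)) (\<mu> (Suc j))"
    proof -
      have e: "h0(Suc j := \<mu> (Suc j)) = \<mu>" by (simp add: h0_def)
      have "pmf (g h0) (h0(Suc j := \<mu> (Suc j))) = pmf (batch q0 \<nu> (pulls T B w (Suc j) h0)) (\<mu> (Suc j))"
        unfolding g_def by (rule pmf_map_inj'[OF inj])
      then show ?thesis unfolding e by simp
    qed
    also have "\<dots> \<le> exp (- S j h0) * exp (- (\<Sum>a\<in>UNIV. real (pulls T B w (Suc j) h0 a) * KL (\<mu> (Suc j) a) (pmf (\<nu> a))))"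
      using Suc.IH[of h0] batch_bound[OF full, where n="pulls T B w (Suc j) h0" and f="\<mu> (Suc j)"]
      by (intro mult_mono) (auto simp: M_def S_def)
    also have "exp (- S j h0) * exp (- (\<Sum>a\<in>UNIV. real (pulls T B w (Suc j) h0 a) * KL (\<mu> (Suc j) a) (pmf (\<nu> a))))
       = exp (- S (Suc j) \<mu>)"
      using Sj by (simp add: S_def pre mult_exp_exp)
    finally show ?thesis by (simp only: S_def)
  qed
qed


definition EE :: "('x::finite \<Rightarrow> real) \<Rightarrow> nat \<Rightarrow> ('x \<Rightarrow> real) set" where
  "EE q0 T = insert q0 ((\<lambda>(k,m). \<lambda>x. real (k x) / real m) ` ({k. \<forall>x. k x \<le> T} \<times> {1..T}))"

lemma card_funs_le:
  "{k::'x::finite \<Rightarrow> nat. \<forall>x. k x \<le> T} = Pi\<^sub>E UNIV (\<lambda>_. {..T})"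
  by (auto simp: PiE_UNIV_domain)

lemma EE_finite: "finite (EE q0 T)"
  unfolding EE_def card_funs_le by (intro finite_insert[THEN iffD2] finite_imageI finite_cartesian_product finite_PiE) auto

lemma card_insert_Suc: "finite A \<Longrightarrow> card (insert x A) \<le> Suc (card A)"
  by (simp add: card_insert_if)

lemma EE_card:
  fixes q0 :: "'x::finite \<Rightarrow> real"
  shows "card (EE q0 (T::nat)) \<le> (T+1) ^ (CARD('x) + 1)"
proof -
  have "card (EE q0 T) \<le> Suc (card ((\<lambda>(k,m). \<lambda>x::'x. real (k x) / real m) ` ({k. \<forall>x. k x \<le> T} \<times> {1..T})))"
  proof -
    have "finite ((\<lambda>(k,m). \<lambda>x::'x. real (k x) / real m) ` ({k. \<forall>x. k x \<le> T} \<times> {1..T}))"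
      unfolding card_funs_le by (intro finite_imageI finite_cartesian_product finite_PiE) auto
    then show ?thesis unfolding EE_def by (rule card_insert_Suc)
  qed
  also have "card ((\<lambda>(k,m). \<lambda>x::'x. real (k x) / real m) ` ({k. \<forall>x. k x \<le> T} \<times> {1..T}))
     \<le> card ({k::'x \<Rightarrow> nat. \<forall>x. k x \<le> T} \<times> {1..T})"
    by (rule card_image_le) (auto simp: card_funs_le intro!: finite_PiE finite_cartesian_product)
  also have "\<dots> = (T+1) ^ CARD('x) * T"
    unfolding card_funs_le by (simp add: card_cartesian_product card_PiE)
  finally have "card (EE q0 T) \<le> Suc ((T+1) ^ CARD('x) * T)" by simp
  also have "\<dots> \<le> (T+1) ^ (CARD('x) + 1)"
  proof -
    have "1 \<le> (T+1) ^ CARD('x)" by simp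
    then show ?thesis by (simp add: algebra_simps)
  qed
  finally show ?thesis .
qed

lemma emp_EE:
  assumes "xs \<in> set_pmf (iid n p)" "n \<le> T"
  shows "emp q0 xs \<in> EE q0 T"
proof (cases "xs = []")
  case True then show ?thesis by (simp add: emp_def EE_def)
next
  case False
  have len: "length xs = n" using iid_set assms(1) by blast
  have mem: "(count_list xs, length xs) \<in> {k. \<forall>x. k x \<le> T} \<times> {1..T}"
    using len assms(2) False count_le_length[of xs] by (auto intro: order.trans simp: Suc_le_eq)
  show ?thesis unfolding EE_def by (rule insertI2, rule rev_image_eqI[OF mem]) (simp add: emp_def False)
qed

context
  fixes B :: nat
    and w :: "nat \<Rightarrow> (nat \<Rightarrow> 'k::finite \<Rightarrow> 'x::finite \<Rightarrow> real) \<Rightarrow> 'k \<Rightarrow> real"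
    and \<nu> :: "'k \<Rightarrow> 'x pmf"
    and q0 :: "'x \<Rightarrow> real"
  assumes B_pos: "0 < B"
    and q0: "q0 \<in> pdists"
    and w_simplex: "\<And>j \<mu>. j \<in> {1..B} \<Longrightarrow> \<mu> \<in> DSeq B \<Longrightarrow>
                      (\<forall>a. 0 \<le> w j (prefix j \<mu>) a) \<and> (\<Sum>a\<in>UNIV. w j (prefix j \<mu>) a) = 1"
begin

lemma w_bounds:
  assumes h: "h \<in> set_pmf (scheme T B w \<nu> q0 j)" and j: "j < B"
  shows "0 \<le> w (Suc j) h a \<and> w (Suc j) h a \<le> 1"
proof -
  define \<mu>' where "\<mu>' = (\<lambda>i. if i \<in> {1..j} then h i else if i \<in> {Suc j..B} then (\<lambda>_. q0) else (\<lambda>_ _. 0))"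
  note hs = scheme_set[OF q0 h]
  have D: "\<mu>' \<in> DSeq B" using hs j q0 by (auto simp: DSeq_def \<mu>'_def)
  have P: "prefix (Suc j) \<mu>' = h"
  proof
    fix i show "prefix (Suc j) \<mu>' i = h i" using hs[rule_format, of i] by (auto simp: prefix_def \<mu>'_def)
  qed
  have "(\<forall>a. 0 \<le> w (Suc j) h a) \<and> (\<Sum>a\<in>UNIV. w (Suc j) h a) = 1"
    using w_simplex[of "Suc j" \<mu>'] D j P by auto
  moreover then have "w (Suc j) h a \<le> (\<Sum>a\<in>UNIV. w (Suc j) h a)"
    by (intro member_le_sum) auto
  ultimately show ?thesis by auto
qed

lemma pulls_le:
  assumes h: "h \<in> set_pmf (scheme T B w \<nu> q0 j)" and j: "j < B"
  shows "pulls T B w (Suc j) h a \<le> T"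
proof -
  have wb: "w (Suc j) h a \<le> 1" using w_bounds[OF h j] by simp
  have "w (Suc j) h a * real T / real B \<le> real T"
  proof -
    have "w (Suc j) h a * real T \<le> real T" using wb by (simp add: mult_left_le_one_le w_bounds[OF h j])
    also have "\<dots> \<le> real T * real B" using B_pos by (simp add: mult_le_cancel_left1)
    finally show ?thesis using B_pos by (simp add: divide_le_eq)
  qed
  then show ?thesis unfolding pulls_def by linarith
qed

lemma scheme_EE:
  "\<mu> \<in> set_pmf (scheme T B w \<nu> q0 j) \<Longrightarrow> j \<le> B \<Longrightarrow> i \<in> {1..j} \<Longrightarrow> \<mu> i a \<in> EE q0 T"
proof (induction j arbitrary: \<mu>)
  case 0 then show ?case by simp
next
  case (Suc j)
  obtain h q where h: "h \<in> set_pmf (scheme T B w \<nu> q0 j)" and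
    q: "q \<in> set_pmf (batch q0 \<nu> (pulls T B w (Suc j) h))" and mu: "\<mu> = h(Suc j := q)"
    using Suc.prems(1) by (rule scheme_SucE)
  show ?case
  proof (cases "i = Suc j")
    case True
    obtain xs where xs: "xs \<in> set_pmf (iid (pulls T B w (Suc j) h a) (\<nu> a))" "q a = emp q0 xs"
      using batch_set[OF q, of a] by auto
    have "pulls T B w (Suc j) h a \<le> T" using pulls_le[OF h] Suc.prems(2) by simp
    then show ?thesis using emp_EE[OF xs(1)] xs(2) True mu by simp
  next
    case False
    then show ?thesis using Suc.IH[OF h] Suc.prems mu by simp
  qed
qed

lemma scheme_finite:
  "finite (set_pmf (scheme T B w \<nu> q0 B))"
proof -
  define \<phi> where "\<phi> = (\<lambda>g::(nat \<times> 'k) \<Rightarrow> 'x \<Rightarrow> real. \<lambda>i a. if i \<in> {1..B} then g (i,a) else (\<lambda>_. 0))"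
  define G where "G = Pi\<^sub>E ({1..B} \<times> (UNIV::'k set)) (\<lambda>_. EE q0 T)"
  have finG: "finite G" unfolding G_def using EE_finite by (intro finite_PiE) auto
  have sub: "set_pmf (scheme T B w \<nu> q0 B) \<subseteq> \<phi> ` G"
  proof
    fix \<mu> assume mu: "\<mu> \<in> set_pmf (scheme T B w \<nu> q0 B)"
    define g where "g = (\<lambda>(i,a). if (i,a) \<in> {1..B} \<times> (UNIV::'k set) then \<mu> i a else undefined)"
    have "g \<in> G" unfolding G_def g_def using scheme_EE[OF mu] by auto
    moreover have "\<mu> = \<phi> g"
    proof (rule ext, rule ext)
      fix i a show "\<mu> i a = \<phi> g i a"
        using scheme_set[OF q0 mu, rule_format, of i] by (auto simp: \<phi>_def g_def)
    qed
    ultimately show "\<mu> \<in> \<phi> ` G" by blast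
  qed
  show ?thesis by (rule finite_subset[OF sub finite_imageI[OF finG]])
qed

lemma scheme_card:
  "card (set_pmf (scheme T B w \<nu> q0 B)) \<le> (T+1) ^ ((CARD('x) + 1) * (B * CARD('k)))"
proof -
  define \<phi> where "\<phi> = (\<lambda>g::(nat \<times> 'k) \<Rightarrow> 'x \<Rightarrow> real. \<lambda>i a. if i \<in> {1..B} then g (i,a) else (\<lambda>_. 0))"
  define G where "G = Pi\<^sub>E ({1..B} \<times> (UNIV::'k set)) (\<lambda>_. EE q0 T)"
  have finG: "finite G" unfolding G_def using EE_finite by (intro finite_PiE) auto
  have sub: "set_pmf (scheme T B w \<nu> q0 B) \<subseteq> \<phi> ` G"
  proof
    fix \<mu> assume mu: "\<mu> \<in> set_pmf (scheme T B w \<nu> q0 B)"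
    define g where "g = (\<lambda>(i,a). if (i,a) \<in> {1..B} \<times> (UNIV::'k set) then \<mu> i a else undefined)"
    have "g \<in> G" unfolding G_def g_def using scheme_EE[OF mu] by auto
    moreover have "\<mu> = \<phi> g"
    proof (rule ext, rule ext)
      fix i a show "\<mu> i a = \<phi> g i a"
        using scheme_set[OF q0 mu, rule_format, of i] by (auto simp: \<phi>_def g_def)
    qed
    ultimately show "\<mu> \<in> \<phi> ` G" by blast
  qed
  have "card (set_pmf (scheme T B w \<nu> q0 B)) \<le> card (\<phi> ` G)"
    by (rule card_mono[OF finite_imageI[OF finG] sub])
  also have "\<dots> \<le> card G" by (rule card_image_le[OF finG])
  also have "card G = card (EE q0 T) ^ (B * CARD('k))"
    unfolding G_def by (simp add: card_PiE card_cartesian_product)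
  also have "\<dots> \<le> ((T+1) ^ (CARD('x) + 1)) ^ (B * CARD('k))"
    by (rule power_mono[OF EE_card]) simp
  finally show ?thesis by (simp only: power_mult)
qed

end


lemma real_pulls:
  assumes "w j h a * real T / real B \<in> \<int>" "0 \<le> w j h a" "0 < B"
  shows "real (pulls T B w j h a) = w j h a * real T / real B"
proof -
  obtain k where k: "w j h a * real T / real B = of_int k" using assms(1) by (auto elim: Ints_cases)
  have "0 \<le> w j h a * real T / real B" using assms(2,3) by simp
  then have "0 \<le> k" using k by simp
  then show ?thesis unfolding pulls_def k by simp
qed

lemma prob_bound:
  fixes B :: nat
    and w :: "nat \<Rightarrow> (nat \<Rightarrow> 'k::finite \<Rightarrow> 'x::finite \<Rightarrow> real) \<Rightarrow> 'k \<Rightarrow> real"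
    and \<nu> :: "'k \<Rightarrow> 'x pmf"
    and q0 :: "'x \<Rightarrow> real"
    and \<Gamma> :: "(nat \<Rightarrow> 'k \<Rightarrow> 'x \<Rightarrow> real) set"
  assumes B_pos: "0 < B"
    and full: "\<And>a x. pmf (\<nu> a) x > 0"
    and q0: "q0 \<in> pdists"
    and w_simplex: "\<And>j \<mu>. j \<in> {1..B} \<Longrightarrow> \<mu> \<in> DSeq B \<Longrightarrow>
                      (\<forall>a. 0 \<le> w j (prefix j \<mu>) a) \<and> (\<Sum>a\<in>UNIV. w j (prefix j \<mu>) a) = 1"
    and Gamma: "\<Gamma> \<subseteq> DSeq B"
    and T: "T \<in> admissible B w \<nu> q0"
    and z: "\<forall>\<mu>\<in>\<Gamma>. z \<le> cost B w \<nu> \<mu>"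
  shows "measure_pmf.prob (scheme T B w \<nu> q0 B) \<Gamma>
     \<le> real (card (set_pmf (scheme T B w \<nu> q0 B))) * exp (- (real T * z))"
proof -
  define M where "M = scheme T B w \<nu> q0 B"
  define S where "S = set_pmf M"
  have finS: "finite S" unfolding S_def M_def by (rule scheme_finite[where w=w, OF B_pos q0 w_simplex])
  have each: "pmf M \<mu> \<le> exp (- (real T * z))" if mu: "\<mu> \<in> \<Gamma> \<inter> S" for \<mu>
  proof -
    have muS: "\<mu> \<in> set_pmf (scheme T B w \<nu> q0 B)" using mu by (simp add: S_def M_def)
    have muD: "\<mu> \<in> DSeq B" using mu Gamma by auto
    have tm: "real (pulls T B w i (prefix i \<mu>) a) * KL (\<mu> i a) (pmf (\<nu> a))
        = (real T / real B) * (w i (prefix i \<mu>) a * KL (\<mu> i a) (pmf (\<nu> a)))"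
      if i: "i \<in> {1..B}" for i a
    proof -
      have pre: "prefix (Suc (i - 1)) \<mu> \<in> set_pmf (scheme T B w \<nu> q0 (i - 1))"
        by (rule scheme_prefix[OF q0 muS]) (use i in auto)
      have ii: "Suc (i - 1) = i" using i by simp
      have adm: "w i (prefix i \<mu>) a * real T / real B \<in> \<int>"
        using T i pre unfolding admissible_def ii by blast
      have nn: "0 \<le> w i (prefix i \<mu>) a" using w_simplex[OF i muD] by blast
      show ?thesis using real_pulls[where w=w and j=i and h="prefix i \<mu>" and a=a, OF adm nn B_pos] by simp
    qed
    have "(\<Sum>i\<in>{1..B}. \<Sum>a\<in>UNIV. real (pulls T B w i (prefix i \<mu>) a) * KL (\<mu> i a) (pmf (\<nu> a)))
        = (\<Sum>i\<in>{1..B}. \<Sum>a\<in>UNIV. (real T / real B) * (w i (prefix i \<mu>) a * KL (\<mu> i a) (pmf (\<nu> a))))"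
      by (intro sum.cong refl) (simp add: tm)
    also have "\<dots> = (real T / real B) * (\<Sum>i\<in>{1..B}. \<Sum>a\<in>UNIV. w i (prefix i \<mu>) a * KL (\<mu> i a) (pmf (\<nu> a)))"
      by (simp add: sum_distrib_left)
    also have "\<dots> = real T * cost B w \<nu> \<mu>" unfolding cost_def by simp
    finally have eq: "(\<Sum>i\<in>{1..B}. \<Sum>a\<in>UNIV. real (pulls T B w i (prefix i \<mu>) a) * KL (\<mu> i a) (pmf (\<nu> a)))
        = real T * cost B w \<nu> \<mu>" .
    have "pmf M \<mu> \<le> exp (- (real T * cost B w \<nu> \<mu>))"
      using scheme_bound[where \<nu>=\<nu> and T=T and B=B and w=w and j=B and \<mu>=\<mu>, OF q0 full] eq by (simp add: M_def)
    also have "\<dots> \<le> exp (- (real T * z))"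
      using z mu by (intro exp_mono) (simp add: mult_left_mono)
    finally show ?thesis .
  qed
  have "measure_pmf.prob M \<Gamma> = measure_pmf.prob M (\<Gamma> \<inter> S)"
    by (simp add: S_def measure_Int_set_pmf)
  also have "\<dots> = (\<Sum>\<mu>\<in>\<Gamma> \<inter> S. pmf M \<mu>)"
    using finS by (intro measure_measure_pmf_finite) auto
  also have "\<dots> \<le> (\<Sum>\<mu>\<in>\<Gamma> \<inter> S. exp (- (real T * z)))"
    by (rule sum_mono) (rule each)
  also have "\<dots> = real (card (\<Gamma> \<inter> S)) * exp (- (real T * z))" by simp
  also have "\<dots> \<le> real (card S) * exp (- (real T * z))"
    using finS by (intro mult_right_mono) (auto intro: card_mono)
  finally show ?thesis by (simp add: M_def S_def)
qed


lemma ln_card_bound: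
  fixes T :: nat and N e :: nat
  assumes "N \<le> (T+1) ^ e" "0 < N" "0 < T"
  shows "ln (real N) \<le> real e * (ln 2 + ln (real T))"
proof -
  have rN: "real N \<le> real ((T+1) ^ e)" using assms(1) by (simp only: of_nat_le_iff)
  have "ln (real N) \<le> ln (real ((T+1) ^ e))" using rN assms(2) by (subst ln_le_cancel_iff) auto
  also have "\<dots> = real e * ln (real T + 1)" by (simp add: ln_realpow add.commute)
  also have "ln (real T + 1) \<le> ln (2 * real T)" using assms(3) by simp
  also have "\<dots> = ln 2 + ln (real T)" using assms(3) by (simp add: ln_mult)
  finally show ?thesis by (simp add: mult_left_mono)
qed

theorem mainTheorem11:
  fixes B :: nat
    and w :: "nat \<Rightarrow> (nat \<Rightarrow> 'k::finite \<Rightarrow> 'x::finite \<Rightarrow> real) \<Rightarrow> 'k \<Rightarrow> real"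
    and \<nu> :: "'k \<Rightarrow> 'x pmf"
    and q0 :: "'x \<Rightarrow> real"
    and \<Gamma> :: "(nat \<Rightarrow> 'k \<Rightarrow> 'x \<Rightarrow> real) set"
  assumes B_pos: "0 < B"
    and full_support: "\<And>a. set_pmf (\<nu> a) = UNIV"
    and q0: "q0 \<in> pdists"
    and w_simplex: "\<And>j \<mu>. j \<in> {1..B} \<Longrightarrow> \<mu> \<in> DSeq B \<Longrightarrow>
                      (\<forall>a. 0 \<le> w j (prefix j \<mu>) a) \<and> (\<Sum>a\<in>UNIV. w j (prefix j \<mu>) a) = 1"
    and Gamma: "\<Gamma> \<subseteq> DSeq B"
  shows "Liminf (inf sequentially (principal (admissible B w \<nu> q0)))
           (\<lambda>T. rate T (measure_pmf.prob (scheme T B w \<nu> q0 B) \<Gamma>))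
         \<ge> (INF \<mu>\<in>closure \<Gamma>. ereal (cost B w \<nu> \<mu>))"
proof -
  have full: "\<And>a x. pmf (\<nu> a) x > 0"
  proof -
    fix a x
    have "x \<in> set_pmf (\<nu> a)" using full_support by simp
    then have "pmf (\<nu> a) x \<noteq> 0" by (simp add: set_pmf_iff)
    then show "pmf (\<nu> a) x > 0" using pmf_nonneg[of "\<nu> a" x] by linarith
  qed
  define A where "A = admissible B w \<nu> q0"
  define F where "F = inf sequentially (principal A)"
  define P where "P = (\<lambda>T. measure_pmf.prob (scheme T B w \<nu> q0 B) \<Gamma>)"
  define I where "I = (INF \<mu>\<in>closure \<Gamma>. ereal (cost B w \<nu> \<mu>))"
  define e where "e = (CARD('x) + 1) * (B * CARD('k))"
  have rate_ne: "\<And>T. -\<infinity> < rate T (P T)" by (simp add: rate_def)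
  have "\<forall>y<I. eventually (\<lambda>T. y < rate T (P T)) F"
  proof (intro allI impI)
    fix y assume y: "y < I"
    show "eventually (\<lambda>T. y < rate T (P T)) F"
    proof (cases y)
      case MInf then show ?thesis using rate_ne by simp
    next
      case PInf then show ?thesis using y by simp
    next
      case (real r)
      obtain z' where z': "y < z'" "z' < I" using dense[OF y] by blast
      then obtain z where zz: "z' = ereal z" using real by (cases z') auto
      have zc: "\<forall>\<mu>\<in>\<Gamma>. z \<le> cost B w \<nu> \<mu>"
      proof
        fix \<mu> assume "\<mu> \<in> \<Gamma>"
        then have "I \<le> ereal (cost B w \<nu> \<mu>)" unfolding I_def
          by (intro INF_lower) (use closure_subset in blast)
        moreover have "ereal z < I" using z'(2) zz by simp
        ultimately have "ereal z \<le> ereal (cost B w \<nu> \<mu>)" by (meson less_imp_le order_trans)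
        then show "z \<le> cost B w \<nu> \<mu>" by simp
      qed
      have rz: "r < z" using z' zz real by simp
      have lim: "(\<lambda>T. real e * (ln 2 / real T + ln (real T) / real T)) \<longlonglongrightarrow> 0"
        using tendsto_mult[OF tendsto_const[of "real e"] tendsto_add[OF lim_const_over_n[of "ln 2"] lim_ln_over_n]]
        by simp
      have ev1: "eventually (\<lambda>T. real e * (ln 2 / real T + ln (real T) / real T) < z - r) sequentially"
        using order_tendstoD(2)[OF lim] rz by simp
      have ev2: "eventually (\<lambda>T::nat. 0 < T) sequentially" by (rule eventually_gt_at_top)
      have ev3: "eventually (\<lambda>T. T \<in> A) (principal A)" by (simp add: eventually_principal)
      have pt: "y < rate T (P T)"
        if T: "T \<in> A" "0 < T" "real e * (ln 2 / real T + ln (real T) / real T) < z - r" for T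
      proof (cases "P T = 0")
        case True then show ?thesis by (simp add: rate_def real)
      next
        case False
        define N where "N = card (set_pmf (scheme T B w \<nu> q0 B))"
        have Pb: "P T \<le> real N * exp (- (real T * z))"
          unfolding P_def N_def
          by (rule prob_bound[where w=w and \<nu>=\<nu>, OF B_pos full q0 w_simplex Gamma T(1)[unfolded A_def] zc])
        have Ppos: "0 < P T" using False by (simp add: P_def zero_less_measure_iff)
        have Npos: "0 < N" using Pb Ppos by (cases "N = 0") auto
        have Nle: "N \<le> (T+1) ^ e" unfolding N_def e_def
          by (rule scheme_card[where w=w and \<nu>=\<nu> and T=T, OF B_pos q0 w_simplex])
        have "ln (P T) \<le> ln (real N * exp (- (real T * z)))" using Pb Ppos by simp
        also have "\<dots> = ln (real N) - real T * z" using Npos by (simp add: ln_mult)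
        also have "ln (real N) \<le> real e * (ln 2 + ln (real T))"
          by (rule ln_card_bound[OF Nle Npos T(2)])
        finally have "ln (P T) \<le> real e * (ln 2 + ln (real T)) - real T * z" by simp
        then have "- ln (P T) / real T \<ge> (real T * z - real e * (ln 2 + ln (real T))) / real T"
          using T(2) by (intro divide_right_mono) auto
        also have "(real T * z - real e * (ln 2 + ln (real T))) / real T
            = z - real e * (ln 2 / real T + ln (real T) / real T)"
          using T(2) by (simp add: field_simps)
        finally have "r < - ln (P T) / real T" using T(3) by simp
        then show ?thesis using False by (simp add: rate_def real)
      qed
      have "eventually (\<lambda>T. real e * (ln 2 / real T + ln (real T) / real T) < z - r \<and> 0 < T) sequentially"
        using ev1 ev2 by (rule eventually_conj)
      then show ?thesis unfolding F_def eventually_inf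
        using ev3 pt by blast
    qed
  qed
  then have "I \<le> Liminf F (\<lambda>T. rate T (P T))" by (simp add: le_Liminf_iff)
  then show ?thesis by (simp add: I_def F_def A_def P_def)
qed

end
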